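(* Let $L\in\mathbb N$, ${\bf A}\in\mathbb R^{M\times N}$, ${\bf b}\in\mathbb R^M$, $\tilde\eta>0$, and let $(r,{\bf u})$ follow the weight-normalized gradient flow with learning rates $(\eta_r,\eta_{\bf u})=(\tilde\eta,1)$, $\|{\bf u}_0\|_2=1$, and ${\bf u}(t)>0$ entrywise for all $t\ge0$ (this holds e.g. if $L\ge2$, $r_0>0$, ${\bf u}_0>0$). Then the quantity $$h_{\tilde\eta}(t):=(I-{\bf A}^\dagger{\bf A})\cdot\begin{cases}\log\Big({\bf u}(t)\exp\big(\tfrac{1}{2\tilde\eta}r(t)^2\big)\Big) & L=2,\\ {\bf u}(t)^{\odot(2-L)}\exp\big(\tfrac{2-L}{2\tilde\eta}r(t)^2\big) & L\neq2\end{cases}$$ is constant in $t\ge0$.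
   Context: $\odot$ denotes entrywise product/power, $\log$ acts entrywise; ${\bf A}^\dagger$ is the Moore–Penrose pseudoinverse. Loss: $\mathcal L({\bf x})=\frac{1}{2L}\|{\bf A}{\bf x}^{\odot L}-{\bf b}\|_2^2$. Weight-normalized loss $\tilde{\mathcal L}(r,{\bf u})=\mathcal L\big(\frac{r}{\|{\bf u}\|_2}{\bf u}\big)$ for $r\in\mathbb R$, ${\bf u}\in\mathbb R^N\setminus\{0\}$. Weight-normalized gradient flow: $\partial_t r=-\eta_r\nabla_r\tilde{\mathcal L}(r,{\bf u})$, $\partial_t{\bf u}=-\eta_{\bf u}\nabla_{\bf u}\tilde{\mathcal L}(r,{\bf u})$, $r(0)=r_0$, ${\bf u}(0)={\bf u}_0$. *)

theory Defs
  imports "HOL-Analysis.Analysis"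
begin

text \<open>Moore--Penrose pseudoinverse, defined by the four Penrose conditions
  (it exists and is unique for every real matrix).\<close>
definition pinv :: "real^'n^'m \<Rightarrow> real^'m^'n" where
  "pinv A = (THE X. A ** X ** A = A \<and> X ** A ** X = X \<and>
                   transpose (A ** X) = A ** X \<and> transpose (X ** A) = X ** A)"

text \<open>Entrywise power x^{\<odot>L}.\<close>
definition epow :: "real^'n \<Rightarrow> nat \<Rightarrow> real^'n" where
  "epow x L = (\<chi> i. (x $ i) ^ L)"

text \<open>Loss L(x) = 1/(2L) * ||A x^{\<odot>L} - b||^2.\<close>
definition loss :: "real^'n^'m \<Rightarrow> real^'m \<Rightarrow> nat \<Rightarrow> real^'n \<Rightarrow> real" where
  "loss A b L x = 1 / (2 * real L) * (norm (A *v epow x L - b))\<^sup>2"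

text \<open>Weight-normalized loss.\<close>
definition wnloss :: "real^'n^'m \<Rightarrow> real^'m \<Rightarrow> nat \<Rightarrow> real \<Rightarrow> real^'n \<Rightarrow> real" where
  "wnloss A b L r u = loss A b L ((r / norm u) *\<^sub>R u)"

text \<open>The quantity h_eta(t) (given r(t), u(t)).\<close>
definition hq :: "real^'n^'m \<Rightarrow> nat \<Rightarrow> real \<Rightarrow> real \<Rightarrow> real^'n \<Rightarrow> real^'n" where
  "hq A L eta r u = (mat 1 - pinv A ** A) *v
     (if L = 2 then (\<chi> i. ln (u $ i * exp (r\<^sup>2 / (2 * eta))))
      else (\<chi> i. (u $ i) powr (2 - real L) * exp ((2 - real L) / (2 * eta) * r\<^sup>2)))"

end

theory Submission
  imports Defs
begin
definition penrose :: "real^'n^'m \<Rightarrow> real^'m^'n \<Rightarrow> bool" where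
  "penrose A X \<longleftrightarrow> A ** X ** A = A \<and> X ** A ** X = X \<and>
                   transpose (A ** X) = A ** X \<and> transpose (X ** A) = X ** A"

lemma penrose_unique:
  assumes "penrose A X" "penrose A Y" shows "X = Y"
proof -
  have x1: "A ** X ** A = A" and x2: "X ** A ** X = X" and x3: "transpose (A ** X) = A ** X"
    and x4: "transpose (X ** A) = X ** A" using assms(1) by (auto simp: penrose_def)
  have y1: "A ** Y ** A = A" and y2: "Y ** A ** Y = Y" and y3: "transpose (A ** Y) = A ** Y"
    and y4: "transpose (Y ** A) = Y ** A" using assms(2) by (auto simp: penrose_def)
  have tA1: "transpose A = transpose A ** (A ** Y)"
    by (metis y1 y3 matrix_transpose_mul matrix_mul_assoc)
  have tA2: "transpose A = (X ** A) ** transpose A"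
  proof -
    have "transpose A = transpose (A ** (X ** A))" using x1 by (simp add: matrix_mul_assoc)
    also have "\<dots> = transpose (X ** A) ** transpose A" by (rule matrix_transpose_mul)
    finally show ?thesis using x4 by simp
  qed
  have "X = X ** (A ** X)" using x2 by (simp add: matrix_mul_assoc)
  also have "\<dots> = X ** (transpose X ** transpose A)" using x3 matrix_transpose_mul[of A X] by simp
  also have "\<dots> = X ** (transpose X ** (transpose A ** (A ** Y)))" using tA1 by simp
  also have "\<dots> = X ** (transpose (A ** X) ** (A ** Y))"
    by (simp add: matrix_transpose_mul matrix_mul_assoc)
  also have "\<dots> = X ** A ** X ** A ** Y" using x3 by (simp add: matrix_mul_assoc)
  also have "\<dots> = X ** A ** Y" using x2 by simp
  finally have X: "X = X ** A ** Y" .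
  have "Y = (Y ** A) ** Y" using y2 by simp
  also have "\<dots> = (transpose A ** transpose Y) ** Y" using y4 matrix_transpose_mul[of Y A] by simp
  also have "\<dots> = (((X ** A) ** transpose A) ** transpose Y) ** Y" using tA2 by simp
  also have "\<dots> = (X ** A) ** (transpose (Y ** A) ** Y)"
    by (simp add: matrix_transpose_mul matrix_mul_assoc)
  also have "\<dots> = X ** A ** (Y ** A ** Y)" using y4 by (simp add: matrix_mul_assoc)
  also have "\<dots> = X ** A ** Y" using y2 by simp
  finally show ?thesis using X by simp
qed

lemma inner_mv: "inner (w::real^'m) (A *v v) = inner (transpose A *v w) v"
  by (metis dot_lmul_matrix transpose_transpose vector_transpose_matrix)

lemma inner_mv2: "inner (A *v v) (w::real^'m) = inner v (transpose A *v w)"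
proof -
  have "inner (A *v v) w = inner w (A *v v)" by (rule inner_commute)
  also have "\<dots> = inner (transpose A *v w) v" by (rule inner_mv)
  also have "\<dots> = inner v (transpose A *v w)" by (rule inner_commute)
  finally show ?thesis .
qed

lemma vec_eq_by_inner: "(\<And>z::real^'n. inner z a = inner z b) \<Longrightarrow> a = b"
  by (metis inner_diff_left inner_diff_right inner_eq_zero_iff right_minus_eq)

lemma sym_by_inner:
  fixes M :: "real^'n^'n"
  assumes "\<And>z y. inner (M *v z) y = inner z (M *v y)"
  shows "transpose M = M"
proof (subst matrix_eq, intro allI)
  fix y
  show "transpose M *v y = M *v y"
  proof (rule vec_eq_by_inner)
    fix z
    have "inner z (transpose M *v y) = inner (M *v z) y"
      by (simp add: inner_mv inner_commute)
    then show "inner z (transpose M *v y) = inner z (M *v y)" using assms by simp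
  qed
qed


lemma kerK_zero:
  fixes A :: "real^'n^'m"
  assumes "A *v (transpose A *v v) = 0" shows "transpose A *v v = 0"
proof -
  have "inner (transpose A *v v) (transpose A *v v) = inner v (A *v (transpose A *v v))"
    by (rule inner_mv[symmetric])
  then show ?thesis using assms by simp
qed

lemma pexists_pt:
  fixes A :: "real^'n^'m" and y :: "real^'m"
  shows "\<exists>k. k \<in> range ((*v) (transpose A)) \<and> transpose A *v (A *v k - y) = 0"
proof -
  obtain a c where a: "a \<in> span (range ((*v) A))" and c: "\<And>w. w \<in> span (range ((*v) A)) \<Longrightarrow> orthogonal c w"
    and yac: "y = a + c"
    using orthogonal_subspace_decomp_exists by blast
  have "subspace (range ((*v) A))"
    by (rule linear_subspace_image[OF matrix_vector_mul_linear subspace_UNIV])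
  then have a': "a \<in> range ((*v) A)" using a by (metis span_eq_iff)
  then obtain z where z: "a = A *v z" by blast
  have "orthogonal c (A *v (transpose A *v c))"
    using c by (simp add: span_base)
  then have "inner (transpose A *v c) (transpose A *v c) = 0"
    by (simp add: orthogonal_def inner_mv)
  then have tc: "transpose A *v c = 0" by simp
  obtain k k' where k: "k \<in> span (range ((*v) (transpose A)))"
    and k': "\<And>w. w \<in> span (range ((*v) (transpose A))) \<Longrightarrow> orthogonal k' w"
    and zk: "z = k + k'"
    using orthogonal_subspace_decomp_exists by blast
  have "subspace (range ((*v) (transpose A)))"
    by (rule linear_subspace_image[OF matrix_vector_mul_linear subspace_UNIV])
  then have kK: "k \<in> range ((*v) (transpose A))" using k by (metis span_eq_iff)
  have "orthogonal k' (transpose A *v (A *v k'))"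
    using k' by (simp add: span_base)
  then have "inner (A *v k') (A *v k') = 0"
    by (simp add: orthogonal_def inner_mv inner_commute)
  then have Ak': "A *v k' = 0" by simp
  have "A *v k - y = - c"
    using yac z zk Ak' by (simp add: matrix_vector_right_distrib)
  then have "transpose A *v (A *v k - y) = 0"
  proof -
    have "transpose A *v (A *v k - y) = transpose A *v (0 - c)" using \<open>A *v k - y = - c\<close> by simp
    also have "\<dots> = transpose A *v 0 - transpose A *v c" by (rule matrix_vector_mult_diff_distrib)
    also have "\<dots> = 0" using tc by (simp only: matrix_vector_mult_0_right diff_self)
    finally show ?thesis .
  qed
  then show ?thesis using kK by blast
qed

lemma puniq_pt:
  fixes A :: "real^'n^'m"
  assumes "k1 \<in> range ((*v) (transpose A))" "transpose A *v (A *v k1 - y) = 0"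
    "k2 \<in> range ((*v) (transpose A))" "transpose A *v (A *v k2 - y) = 0"
  shows "k1 = k2"
proof -
  obtain v1 v2 where v: "k1 = transpose A *v v1" "k2 = transpose A *v v2" using assms by blast
  have "transpose A *v (A *v (k1 - k2)) = 0"
  proof -
    have "A *v (k1 - k2) = (A *v k1 - y) - (A *v k2 - y)" by (simp add: matrix_vector_mult_diff_distrib)
    then have "transpose A *v (A *v (k1 - k2)) = transpose A *v (A *v k1 - y) - transpose A *v (A *v k2 - y)"
      by (simp only: matrix_vector_mult_diff_distrib)
    then show ?thesis using assms(2,4) by (simp only: diff_self)
  qed
  then have "inner (A *v (k1 - k2)) (A *v (k1 - k2)) = 0"
    by (simp only: inner_mv2 inner_zero_right)
  then have "A *v (transpose A *v (v1 - v2)) = 0"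
    using v by (simp add: matrix_vector_mult_diff_distrib)
  then have "transpose A *v (v1 - v2) = 0" by (rule kerK_zero)
  then show ?thesis using v by (simp add: matrix_vector_mult_diff_distrib)
qed


lemma penrose_exists:
  fixes A :: "real^'n^'m"
  shows "\<exists>X. penrose A X"
proof -
  define K where "K = range ((*v) (transpose A))"
  define P where "P y k \<longleftrightarrow> k \<in> K \<and> transpose A *v (A *v k - y) = 0" for y k
  define f where "f y = (SOME k. P y k)" for y
  have Pf: "P y (f y)" for y
    unfolding f_def by (rule someI_ex) (use pexists_pt[of A y] in \<open>auto simp: P_def K_def\<close>)
  have Pu: "P y k1 \<Longrightarrow> P y k2 \<Longrightarrow> k1 = k2" for y k1 k2
    unfolding P_def K_def using puniq_pt by blast
  have fu: "P y k \<Longrightarrow> f y = k" for y k using Pf Pu by blast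
  have Ksub: "subspace K" unfolding K_def
    by (rule linear_subspace_image[OF matrix_vector_mul_linear subspace_UNIV])
  have "linear f"
  proof (rule linearI)
    fix y1 y2
    show "f (y1 + y2) = f y1 + f y2"
    proof (rule fu)
      have "f y1 \<in> K" "f y2 \<in> K" "transpose A *v (A *v f y1 - y1) = 0" "transpose A *v (A *v f y2 - y2) = 0"
        using Pf[of y1] Pf[of y2] by (auto simp: P_def)
      then show "P (y1 + y2) (f y1 + f y2)"
      proof -
        have "A *v (f y1 + f y2) - (y1 + y2) = (A *v f y1 - y1) + (A *v f y2 - y2)"
          by (simp add: matrix_vector_right_distrib)
        then have "transpose A *v (A *v (f y1 + f y2) - (y1 + y2)) = 0"
          using \<open>transpose A *v (A *v f y1 - y1) = 0\<close> \<open>transpose A *v (A *v f y2 - y2) = 0\<close>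
          by (simp only: matrix_vector_right_distrib add_0_right)
        then show ?thesis using Ksub \<open>f y1 \<in> K\<close> \<open>f y2 \<in> K\<close> by (simp add: subspace_add P_def del: vector_transpose_matrix)
      qed
    qed
  next
    fix c :: real and y
    show "f (c *\<^sub>R y) = c *\<^sub>R f y"
    proof (rule fu)
      have "f y \<in> K" "transpose A *v (A *v f y - y) = 0"
        using Pf[of y] by (auto simp: P_def)
      then show "P (c *\<^sub>R y) (c *\<^sub>R f y)"
      proof -
        have "A *v (c *\<^sub>R f y) - c *\<^sub>R y = c *\<^sub>R (A *v f y - y)"
          by (simp only: matrix_vector_mult_scaleR scaleR_diff_right)
        then have "transpose A *v (A *v (c *\<^sub>R f y) - c *\<^sub>R y) = 0"
          using \<open>transpose A *v (A *v f y - y) = 0\<close>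
          by (simp only: matrix_vector_mult_scaleR scaleR_zero_right)
        then show ?thesis using Ksub \<open>f y \<in> K\<close> by (simp add: subspace_scale P_def del: vector_transpose_matrix)
      qed
    qed
  qed
  define X where "X = matrix f"
  have Xf: "X *v y = f y" for y unfolding X_def using \<open>linear f\<close> by (simp add: matrix_works)
  \<comment> \<open>key facts\<close>
  have fK: "f y \<in> K" and fN: "transpose A *v (A *v f y - y) = 0" for y using Pf[of y] by (auto simp: P_def)
  have c1: "A *v f (A *v x) = A *v x" for x
  proof -
    obtain v where v: "f (A *v x) = transpose A *v v" using fK unfolding K_def by blast
    have "transpose A *v (A *v (transpose A *v v - x)) = 0"
      using fN[of "A *v x"] v by (simp add: matrix_vector_mult_diff_distrib del: vector_transpose_matrix)
    then have "inner (A *v (transpose A *v v - x)) (A *v (transpose A *v v - x)) = 0"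
      by (simp only: inner_mv2 inner_zero_right)
    then have "A *v (transpose A *v v - x) = 0" by simp
    then show ?thesis using v by (simp add: matrix_vector_mult_diff_distrib del: vector_transpose_matrix)
  qed
  have c2: "f (A *v f y) = f y" for y
    by (rule fu) (use fK[of y] in \<open>simp add: P_def\<close>)
  have orthK: "k \<in> K \<Longrightarrow> A *v w = 0 \<Longrightarrow> inner k w = 0" for k w
  proof -
    assume "k \<in> K" "A *v w = 0"
    then obtain v where "k = transpose A *v v" unfolding K_def by blast
    then have "inner k w = inner v (A *v w)" using inner_mv[of v A w] by (simp only: inner_commute)
    then show ?thesis using \<open>A *v w = 0\<close> by simp
  qed
  have s3: "inner (A *v f z) y = inner z (A *v f y)" for z y
  proof -
    have e: "inner (A *v f z) (A *v f y) = inner (A *v f z) y" for z y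
    proof -
      have "inner (A *v f z) (A *v f y - y) = inner (f z) (transpose A *v (A *v f y - y))"
        by (rule inner_mv2)
      also have "\<dots> = 0" by (simp only: fN inner_zero_right)
      finally show ?thesis by (simp add: inner_diff_right)
    qed
    have "inner (A *v f z) y = inner (A *v f z) (A *v f y)" using e[of z y] by simp
    also have "\<dots> = inner (A *v f y) (A *v f z)" by (rule inner_commute)
    also have "\<dots> = inner (A *v f y) z" by (rule e)
    also have "\<dots> = inner z (A *v f y)" by (rule inner_commute)
    finally show ?thesis .
  qed
  have s4: "inner (f (A *v z)) y = inner z (f (A *v y))" for z y
  proof -
    have e: "inner (f (A *v z)) (f (A *v y)) = inner (f (A *v z)) y" for z y
    proof -
      have "A *v (y - f (A *v y)) = 0"
        by (simp only: matrix_vector_mult_diff_distrib c1 diff_self)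
      then have "inner (f (A *v z)) (y - f (A *v y)) = 0"
        by (rule orthK[OF fK])
      then show ?thesis by (simp add: inner_diff_right)
    qed
    have "inner (f (A *v z)) y = inner (f (A *v z)) (f (A *v y))" using e[of z y] by simp
    also have "\<dots> = inner (f (A *v y)) (f (A *v z))" by (rule inner_commute)
    also have "\<dots> = inner (f (A *v y)) z" by (rule e)
    also have "\<dots> = inner z (f (A *v y))" by (rule inner_commute)
    finally show ?thesis .
  qed
  have mvX: "(M ** X) *v z = M *v f z" for M :: "real^'n^'k" and z
    by (simp only: matrix_vector_mul_assoc[symmetric] Xf)
  have mvA: "(M ** A) *v z = M *v (A *v z)" for M :: "real^'m^'k" and z
    by (simp only: matrix_vector_mul_assoc[symmetric])
  have "penrose A X"
    unfolding penrose_def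
  proof (intro conjI)
    show "A ** X ** A = A"
      by (subst matrix_eq) (simp only: mvA mvX c1 simp_thms)
    show "X ** A ** X = X"
      by (subst matrix_eq) (simp only: mvX mvA Xf c2 simp_thms)
    show "transpose (A ** X) = A ** X"
      by (rule sym_by_inner) (simp only: mvX s3)
    show "transpose (X ** A) = X ** A"
      by (rule sym_by_inner) (simp only: mvA Xf s4)
  qed
  then show ?thesis by blast
qed

lemma pinv_penrose: "penrose A (pinv A)"
proof -
  have "\<exists>!X. penrose A X" using penrose_exists penrose_unique by blast
  then show ?thesis unfolding pinv_def penrose_def[symmetric] by (rule theI')
qed

lemma proj_kills:
  fixes A :: "real^'n^'m"
  shows "(mat 1 - pinv A ** A) *v (transpose A *v w) = 0"
proof -
  let ?X = "pinv A"
  have x1: "A ** ?X ** A = A" and x4: "transpose (?X ** A) = ?X ** A"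
    using pinv_penrose[of A] by (auto simp: penrose_def)
  have "(?X ** A) ** transpose A = transpose (A ** (?X ** A))"
    using x4 by (simp add: matrix_transpose_mul)
  also have "\<dots> = transpose A" using x1 by (simp add: matrix_mul_assoc)
  finally have e: "(?X ** A) ** transpose A = transpose A" .
  have "(?X ** A) *v (transpose A *v w) = transpose A *v w"
    by (simp only: matrix_vector_mul_assoc e)
  then show ?thesis by (simp add: matrix_vector_mult_diff_rdistrib del: vector_transpose_matrix)
qed


lemma bl_mv: "bounded_linear (\<lambda>x. (A::real^'n^'m) *v x)"
  by (simp add: linear_conv_bounded_linear)

lemma epow_deriv:
  fixes x :: "real^'n"
  shows "((\<lambda>x. epow x L) has_derivative (\<lambda>h. \<chi> i. real L * (x$i)^(L-1) * h$i)) (at x within S)"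
proof (rule has_derivative_componentwise_within[THEN iffD2], intro ballI)
  fix b :: "real^'n" assume "b \<in> Basis"
  then obtain j where b: "b = axis j 1" by (auto simp: Basis_vec_def)
  have 1: "(\<lambda>y. epow y L \<bullet> b) = (\<lambda>y. (y$j)^L)"
    by (simp add: b epow_def cart_eq_inner_axis[symmetric])
  have 2: "(\<lambda>h. (\<chi> i. real L * (x$i)^(L-1) * h$i) \<bullet> b) = (\<lambda>h. of_nat L * h$j * (x$j)^(L-1))"
    by (simp add: b cart_eq_inner_axis[symmetric] mult_ac)
  show "((\<lambda>y. epow y L \<bullet> b) has_derivative (\<lambda>h. (\<chi> i. real L * (x$i)^(L-1) * h$i) \<bullet> b)) (at x within S)"
    unfolding 1 2
    by (rule has_derivative_power[OF bounded_linear.has_derivative[OF bounded_linear_vec_nth has_derivative_ident]])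
qed

lemma ar1: "a = c \<Longrightarrow> 1 / (2 * l) * (c + a) = 1 / l * (c::real)"
  by (cases "l = 0") (simp_all add: field_simps)

lemma ar2: "l \<noteq> 0 \<Longrightarrow> 1 / l * (g * (l * p * hh)) = p * g * (hh::real)"
  by (simp add: field_simps)

definition Gr :: "real^'n^'m \<Rightarrow> real^'m \<Rightarrow> nat \<Rightarrow> real^'n \<Rightarrow> real^'n" where
  "Gr A b L x = (\<chi> i. (x$i)^(L-1) * (transpose A *v (A *v epow x L - b))$i)"

lemma loss_deriv:
  fixes A :: "real^'n^'m" and x :: "real^'n"
  assumes "L \<ge> 1"
  shows "(loss A b L has_derivative (\<lambda>h. inner (Gr A b L x) h)) (at x within S)"
proof -
  define w where "w = A *v epow x L - b"
  define E where "E h = (\<chi> i. real L * (x$i)^(L-1) * h$i)" for h :: "real^'n"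
  have v: "((\<lambda>x. A *v epow x L - b) has_derivative (\<lambda>h. A *v E h)) (at x within S)"
    unfolding E_def
    using has_derivative_diff[OF bounded_linear.has_derivative[OF bl_mv epow_deriv] has_derivative_const]
    by simp
  have eq: "loss A b L = (\<lambda>x. 1 / (2 * real L) * inner (A *v epow x L - b) (A *v epow x L - b))"
    by (simp add: loss_def fun_eq_iff power2_norm_eq_inner)
  have d: "(loss A b L has_derivative (\<lambda>h. 1 / (2 * real L) * (inner w (A *v E h) + inner (A *v E h) w))) (at x within S)"
    unfolding eq w_def
    by (rule has_derivative_mult_right[OF has_derivative_inner[OF v v]])
  have "1 / (2 * real L) * (inner w (A *v E h) + inner (A *v E h) w) = inner (Gr A b L x) h" for h
  proof -
    have "1 / (2 * real L) * (inner w (A *v E h) + inner (A *v E h) w) = 1 / real L * inner (transpose A *v w) (E h)"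
    proof -
      have "inner (A *v E h) w = inner w (A *v E h)" by (rule inner_commute)
      moreover have "inner w (A *v E h) = inner (transpose A *v w) (E h)" by (rule inner_mv)
      ultimately show ?thesis by (simp only: ar1)
    qed
    also have "\<dots> = inner (Gr A b L x) h"
      unfolding inner_vec_def E_def Gr_def w_def sum_distrib_left
    proof (intro sum.cong refl)
      fix i
      have "real L \<noteq> 0" using assms by simp
      show "1 / real L * ((transpose A *v (A *v epow x L - b)) $ i \<bullet> (\<chi> i. real L * x $ i ^ (L - 1) * h $ i) $ i) =
          (\<chi> i. x $ i ^ (L - 1) * (transpose A *v (A *v epow x L - b)) $ i) $ i \<bullet> h $ i"
        using ar2[OF \<open>real L \<noteq> 0\<close>] by (simp only: vec_lambda_beta inner_real_def)
    qed
    finally show ?thesis .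
  qed
  then have "(\<lambda>h. 1 / (2 * real L) * (inner w (A *v E h) + inner (A *v E h) w)) = (\<lambda>h. inner (Gr A b L x) h)"
    by (rule ext)
  then show ?thesis using d by (simp only:)
qed


lemma N_deriv:
  fixes v :: "real^'n"
  assumes "v \<noteq> 0"
  shows "((\<lambda>v'. (r / norm v') *\<^sub>R v') has_derivative
     (\<lambda>h. (r / norm v) *\<^sub>R h - (r * inner v h / norm v ^ 3) *\<^sub>R v)) (at v)"
proof -
  have n: "(norm has_derivative (\<lambda>h. inner h (sgn v))) (at v)"
    using has_derivative_norm[OF assms] by simp
  have nv: "norm v \<noteq> 0" using assms by simp
  show ?thesis
    apply (rule has_derivative_eq_rhs)
     apply (rule has_derivative_scaleR[OF has_derivative_divide[OF has_derivative_const n] has_derivative_ident])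
    using nv apply simp
    apply (rule ext)
    apply (simp add: sgn_div_norm inner_commute algebra_simps power3_eq_cube divide_simps)
    done
qed


lemma wn_u:
  fixes A :: "real^'n^'m" and v gg :: "real^'n"
  assumes L: "L \<ge> 1" and v: "v \<noteq> 0"
    and d: "((\<lambda>v'. wnloss A b L r v') has_derivative (\<lambda>h. inner gg h)) (at v)"
  defines "G \<equiv> Gr A b L ((r / norm v) *\<^sub>R v)"
  shows "gg = (r / norm v) *\<^sub>R G - (r * inner G v / norm v ^ 3) *\<^sub>R v"
proof -
  have d2: "((\<lambda>v'. wnloss A b L r v') has_derivative
      (\<lambda>h. inner G ((r / norm v) *\<^sub>R h - (r * inner v h / norm v ^ 3) *\<^sub>R v))) (at v)"
    unfolding wnloss_def G_def
    by (rule has_derivative_compose[OF N_deriv[OF v] loss_deriv[OF L]])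
  have "(\<lambda>h. inner gg h) = (\<lambda>h. inner G ((r / norm v) *\<^sub>R h - (r * inner v h / norm v ^ 3) *\<^sub>R v))"
    by (rule has_derivative_unique[OF d d2])
  then have e: "inner gg h = inner ((r / norm v) *\<^sub>R G - (r * inner G v / norm v ^ 3) *\<^sub>R v) h" for h
    by (drule_tac x=h in fun_cong) (simp add: inner_diff_left inner_diff_right inner_commute algebra_simps)
  show ?thesis
    apply (rule vec_eq_by_inner)
    apply (subst (1 2) inner_commute)
    apply (rule e)
    done
qed

lemma wn_r:
  fixes A :: "real^'n^'m" and v :: "real^'n"
  assumes L: "L \<ge> 1" and v: "v \<noteq> 0"
    and d: "((\<lambda>s. wnloss A b L s v) has_real_derivative g) (at r)"
  shows "g = inner (Gr A b L ((r / norm v) *\<^sub>R v)) v / norm v"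
proof -
  have lin: "((\<lambda>s. (s / norm v) *\<^sub>R v) has_derivative (\<lambda>k. (k / norm v) *\<^sub>R v)) (at r)"
    using v by (auto intro!: derivative_eq_intros)
  have d2: "((\<lambda>s. wnloss A b L s v) has_derivative
      (\<lambda>k. inner (Gr A b L ((r / norm v) *\<^sub>R v)) ((k / norm v) *\<^sub>R v))) (at r)"
    unfolding wnloss_def
    by (rule has_derivative_compose[OF lin loss_deriv[OF L]])
  have "(\<lambda>k. k * g) = (\<lambda>k. inner (Gr A b L ((r / norm v) *\<^sub>R v)) ((k / norm v) *\<^sub>R v))"
    by (rule has_derivative_unique[OF d[unfolded has_field_derivative_def mult.commute[of g]] d2])
  from fun_cong[OF this, of 1] show ?thesis by simp
qed

lemma wk2:
  fixes uk r :: "real \<Rightarrow> real"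
  assumes eta: "eta > 0"
    and U: "(uk has_real_derivative du) (at t within S)"
    and R: "(r has_real_derivative dr) (at t within S)"
    and pos: "uk t > 0"
    and du: "du = -(r t * ((r t * uk t) * g) - r t * c * uk t)"
    and dr: "dr = -eta * c"
  shows "((\<lambda>t. ln (uk t * exp ((r t)\<^sup>2 / (2 * eta)))) has_real_derivative (- (r t)\<^sup>2 * g)) (at t within S)"
proof -
  define E where "E = exp ((r t)\<^sup>2 / (2 * eta))"
  have f: "((\<lambda>x. uk x * exp ((r x)\<^sup>2 / (2 * eta))) has_real_derivative
      du * E + (E * (2 * r t * dr / (2 * eta))) * uk t) (at t within S)"
    unfolding E_def
    apply (rule DERIV_mult U)+
    apply (rule DERIV_chain2[OF DERIV_exp])
    apply (rule DERIV_cdivide)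
    apply (rule DERIV_cong[OF DERIV_power[OF R]])
    apply simp
    done
  have p: "0 < uk t * E" using pos by (simp add: E_def)
  have l: "((\<lambda>x. ln (uk x * exp ((r x)\<^sup>2 / (2 * eta)))) has_real_derivative
      1 / (uk t * E) * (du * E + (E * (2 * r t * dr / (2 * eta))) * uk t)) (at t within S)"
    using DERIV_chain2[OF DERIV_ln_divide[OF p[unfolded E_def]] f] by (simp add: E_def)
  show ?thesis
  proof (rule DERIV_cong[OF l])
    have "E > 0" by (simp add: E_def)
    then show "1 / (uk t * E) * (du * E + E * (2 * r t * dr / (2 * eta)) * uk t) = - (r t)\<^sup>2 * g"
      using pos eta unfolding du dr by (simp add: field_simps power2_eq_square)
  qed
qed


lemma wkL:
  fixes uk r :: "real \<Rightarrow> real"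
  assumes eta: "eta > 0" and L: "L \<ge> 1"
    and U: "(uk has_real_derivative du) (at t within S)"
    and R: "(r has_real_derivative dr) (at t within S)"
    and pos: "uk t > 0"
    and du: "du = -(r t * ((r t * uk t) ^ (L - 1) * g) - r t * c * uk t)"
    and dr: "dr = -eta * c"
  shows "((\<lambda>t. uk t powr (2 - real L) * exp ((2 - real L) / (2 * eta) * (r t)\<^sup>2)) has_real_derivative
      (- (2 - real L) * exp ((2 - real L) / (2 * eta) * (r t)\<^sup>2) * (r t) ^ L * g)) (at t within S)"
proof -
  define a where "a = 2 - real L"
  define E where "E = exp (a / (2 * eta) * (r t)\<^sup>2)"
  define p where "p = uk t powr (a - 1)"
  have fu: "((\<lambda>x. uk x powr a) has_real_derivative a * uk t powr (a - 1) * du) (at t within S)"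
    using DERIV_chain2[OF has_real_derivative_powr[OF pos] U] by simp
  have fe: "((\<lambda>x. exp (a / (2 * eta) * (r x)\<^sup>2)) has_real_derivative
      E * (a / (2 * eta) * (real 2 * r t ^ (2 - 1) * dr))) (at t within S)"
    unfolding E_def
    by (rule DERIV_cong[OF DERIV_chain2[OF DERIV_exp DERIV_cmult[OF DERIV_power[OF R]]]]) simp
  have f: "((\<lambda>x. uk x powr a * exp (a / (2 * eta) * (r x)\<^sup>2)) has_real_derivative
      a * p * du * E + E * (a / (2 * eta) * (real 2 * r t ^ (2 - 1) * dr)) * uk t powr a) (at t within S)"
    using DERIV_mult[OF fu fe] unfolding p_def E_def by simp
  have h1: "uk t powr a = p * uk t"
    unfolding p_def using pos by (simp add: powr_diff field_simps)
  have h2: "p * uk t ^ (L - 1) = 1"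
  proof -
    have "uk t ^ (L - 1) = uk t powr real (L - 1)" using pos by (simp add: powr_realpow)
    also have "real (L - 1) = - (a - 1)" using L unfolding a_def by (simp add: of_nat_diff)
    finally show ?thesis unfolding p_def using pos by (simp add: powr_add[symmetric])
  qed
  have h3: "r t * r t ^ (L - 1) = r t ^ L"
    using L by (metis Suc_diff_le diff_Suc_1 power_Suc)
  have "a * p * du * E + E * (a / (2 * eta) * (real 2 * r t ^ (2 - 1) * dr)) * uk t powr a
      = a * E * (p * du + r t * (dr / eta) * p * uk t)"
    using eta unfolding h1 by (simp add: field_simps)
  also have "p * du = - (r t ^ L * g) + r t * c * p * uk t"
  proof -
    have "p * du = - ((r t * r t ^ (L - 1)) * (p * uk t ^ (L - 1)) * g) + r t * c * p * uk t"
      unfolding du by (simp add: power_mult_distrib algebra_simps)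
    then show ?thesis unfolding h2 h3 by simp
  qed
  also have "r t * (dr / eta) * p * uk t = - (r t * c * p * uk t)"
    using eta unfolding dr by simp
  finally have eq: "a * p * du * E + E * (a / (2 * eta) * (real 2 * r t ^ (2 - 1) * dr)) * uk t powr a
      = - a * E * r t ^ L * g" by simp
  show ?thesis using DERIV_cong[OF f eq] unfolding a_def E_def .
qed


theorem mainTheorem10:
  fixes A :: "real^'n^'m" and b :: "real^'m" and L :: nat and eta :: real
    and r :: "real \<Rightarrow> real" and u :: "real \<Rightarrow> real^'n"
    and gr :: "real \<Rightarrow> real" and gu :: "real \<Rightarrow> real^'n"
  assumes L_pos: "L \<ge> 1"
    and eta_pos: "eta > 0"
    and grad_r: "\<And>t. t \<ge> 0 \<Longrightarrow>
        ((\<lambda>s. wnloss A b L s (u t)) has_real_derivative gr t) (at (r t))"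
    and grad_u: "\<And>t. t \<ge> 0 \<Longrightarrow>
        ((\<lambda>v. wnloss A b L (r t) v) has_derivative (\<lambda>h. gu t \<bullet> h)) (at (u t))"
    and flow_r: "\<And>t. t \<ge> 0 \<Longrightarrow> (r has_real_derivative (- eta * gr t)) (at t within {0..})"
    and flow_u: "\<And>t. t \<ge> 0 \<Longrightarrow> (u has_vector_derivative (- gu t)) (at t within {0..})"
    and u0_norm: "norm (u 0) = 1"
    and u_pos: "\<And>t i. t \<ge> 0 \<Longrightarrow> u t $ i > 0"
  shows "\<forall>t\<ge>0. hq A L eta (r t) (u t) = hq A L eta (r 0) (u 0)"
proof -
  have unz: "u t \<noteq> 0" if "t \<ge> 0" for t
    using u_pos[OF that, of undefined] by auto
  define G where "G t = Gr A b L ((r t / norm (u t)) *\<^sub>R u t)" for t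
  have gu: "gu t = (r t / norm (u t)) *\<^sub>R G t - (r t * inner (G t) (u t) / norm (u t) ^ 3) *\<^sub>R u t"
    if "t \<ge> 0" for t
    unfolding G_def by (rule wn_u[OF L_pos unz[OF that] grad_u[OF that]])
  have gr: "gr t = inner (G t) (u t) / norm (u t)" if "t \<ge> 0" for t
    unfolding G_def by (rule wn_r[OF L_pos unz[OF that] grad_r[OF that]])
  have ug: "inner (u t) (gu t) = 0" if "t \<ge> 0" for t
  proof -
    have n: "norm (u t) \<noteq> 0" using unz[OF that] by simp
    have "inner (u t) (u t) = norm (u t) ^ 2" by (simp add: power2_norm_eq_inner)
    then show ?thesis using n unfolding gu[OF that]
      by (simp add: inner_diff_right inner_commute field_simps power2_eq_square power3_eq_cube)
  qed
  have nd: "((\<lambda>t. inner (u t) (u t)) has_real_derivative 0) (at t within {0..})" if "t \<in> {0..}" for t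
  proof -
    have t: "t \<ge> 0" using that by simp
    have du: "(u has_derivative (\<lambda>h. h *\<^sub>R (- gu t))) (at t within {0..})"
      using flow_u[OF t] by (simp add: has_vector_derivative_def)
    have "((\<lambda>t. inner (u t) (u t)) has_derivative (\<lambda>h. inner (u t) (h *\<^sub>R (- gu t)) + inner (h *\<^sub>R (- gu t)) (u t))) (at t within {0..})"
      by (rule has_derivative_inner[OF du du])
    then show ?thesis
      unfolding has_field_derivative_def
      by (rule has_derivative_eq_rhs) (auto simp: inner_commute[of _ "u t"] ug[OF t])
  qed
  obtain c0 where c0: "\<And>x. x \<in> {0..} \<Longrightarrow> inner (u x) (u x) = c0"
    using has_field_derivative_zero_constant[of "{0..}" "\<lambda>t. inner (u t) (u t)"] nd by auto
  have norm1: "norm (u t) = 1" if "t \<ge> 0" for t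
  proof -
    have "inner (u t) (u t) = inner (u 0) (u 0)" using c0[of t] c0[of 0] that by simp
    also have "\<dots> = 1" using u0_norm by (simp add: power2_norm_eq_inner[symmetric])
    finally show ?thesis by (simp add: norm_eq_sqrt_inner)
  qed

  define P where "P = mat 1 - pinv A ** A"
  define gv where "gv t = transpose A *v (A *v epow (r t *\<^sub>R u t) L - b)" for t
  define wf where "wf t k = (if L = 2 then ln (u t $ k * exp ((r t)\<^sup>2 / (2 * eta)))
      else u t $ k powr (2 - real L) * exp ((2 - real L) / (2 * eta) * (r t)\<^sup>2))" for t k
  define coef where "coef t = (if L = 2 then - (r t)\<^sup>2
      else - (2 - real L) * exp ((2 - real L) / (2 * eta) * (r t)\<^sup>2) * (r t) ^ L)" for t
  have hq_eq: "hq A L eta (r s) (u s) = P *v (\<chi> k. wf s k)" for s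
    unfolding hq_def P_def wf_def by (cases "L = 2") simp_all
  have Gk: "G t $ k = (r t * u t $ k) ^ (L - 1) * gv t $ k" if "t \<ge> 0" for t k
    unfolding G_def Gr_def gv_def using norm1[OF that] by simp
  have ucomp: "((\<lambda>s. u s $ k) has_real_derivative (- gu t $ k)) (at t within {0..})" if "t \<ge> 0" for t k
  proof -
    have "((\<lambda>s. u s $ k) has_derivative (\<lambda>h. (h *\<^sub>R (- gu t)) $ k)) (at t within {0..})"
      by (rule bounded_linear.has_derivative[OF bounded_linear_vec_nth flow_u[OF that, unfolded has_vector_derivative_def]])
    then show ?thesis unfolding has_field_derivative_def
      by (rule has_derivative_eq_rhs) (auto simp: fun_eq_iff)
  qed
  have wd: "((\<lambda>s. wf s k) has_real_derivative coef t * gv t $ k) (at t within {0..})" if "t \<ge> 0" for t k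
  proof -
    have n1: "norm (u t) = 1" by (rule norm1[OF that])
    have du: "- gu t $ k = -(r t * ((r t * u t $ k) ^ (L - 1) * gv t $ k) - r t * inner (G t) (u t) * u t $ k)"
      unfolding gu[OF that] n1 using Gk[OF that] by simp
    have dr: "- eta * gr t = - eta * inner (G t) (u t)"
      unfolding gr[OF that] n1 by simp
    show ?thesis
    proof (cases "L = 2")
      case True
      have du2: "- gu t $ k = -(r t * ((r t * u t $ k) * gv t $ k) - r t * inner (G t) (u t) * u t $ k)"
        using du True by simp
      show ?thesis unfolding wf_def coef_def using True
        wk2[OF eta_pos ucomp[OF that] flow_r[OF that] u_pos[OF that] du2 dr] by simp
    next
      case False
      show ?thesis unfolding wf_def coef_def using False
        wkL[OF eta_pos L_pos ucomp[OF that] flow_r[OF that] u_pos[OF that] du dr] by simp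
    qed
  qed
  have hd: "((\<lambda>s. hq A L eta (r s) (u s) $ j) has_real_derivative 0) (at t within {0..})"
    if "t \<in> {0..}" for t j
  proof -
    have t: "t \<ge> 0" using that by simp
    have D: "((\<lambda>s. \<Sum>k\<in>UNIV. P $ j $ k * wf s k) has_real_derivative
        (\<Sum>k\<in>UNIV. P $ j $ k * (coef t * gv t $ k))) (at t within {0..})"
      by (rule DERIV_sum, rule DERIV_cmult, rule wd[OF t])
    have e1: "(\<Sum>k\<in>UNIV. P $ j $ k * (coef t * gv t $ k)) = coef t * (P *v gv t) $ j"
      by (simp add: matrix_vector_mult_def sum_distrib_left mult_ac)
    have "P *v gv t = 0"
      unfolding P_def gv_def by (rule proj_kills)
    then have e2: "(\<Sum>k\<in>UNIV. P $ j $ k * (coef t * gv t $ k)) = 0" unfolding e1 by simp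
    have fe: "(\<lambda>s. hq A L eta (r s) (u s) $ j) = (\<lambda>s. \<Sum>k\<in>UNIV. P $ j $ k * wf s k)"
      by (simp add: hq_eq matrix_vector_mult_def)
    show ?thesis unfolding fe using D unfolding e2 .
  qed
  show ?thesis
  proof (intro allI impI)
    fix t :: real assume t: "t \<ge> 0"
    show "hq A L eta (r t) (u t) = hq A L eta (r 0) (u 0)"
    proof (subst vec_eq_iff, intro allI)
      fix j
      obtain cj where "\<And>x. x \<in> {0..} \<Longrightarrow> hq A L eta (r x) (u x) $ j = cj"
        using has_field_derivative_zero_constant[of "{0..}" "\<lambda>s. hq A L eta (r s) (u s) $ j"] hd by auto
      then show "hq A L eta (r t) (u t) $ j = hq A L eta (r 0) (u 0) $ j" using t by simp
    qed
  qed
qed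

end
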